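(* Let $r=1$ with single input node $q$ (so $\Pi=\mathbf e_q$), $G\ge0$ entrywise, $\overline\lambda(G)<1$, $\sigma_v^2>0$, and let $(\mathcal S,\{j\},\mathcal P)$ be a node cutset partition with singleton cutset $\{j\}$. Let $\widetilde G=[G_{pp}\ G_{pc}]$. If every row sum of $\widetilde G$ is at most $1$, then for every $j_1\in\mathcal P$: $\mathbb P_{e_m}(j)\le\mathbb P_{e_m}(j_1)$ and $\mathbb P_{e_v}(j)\le\mathbb P_{e_v}(j_1)$. If every row sum of $\widetilde G$ is greater than $1$, then for every $j_1\in\mathcal P$: $\mathbb P_{e_m}(j)\ge\mathbb P_{e_m}(j_1)$ and $\mathbb P_{e_v}(j)\ge\mathbb P_{e_v}(j_1)$.
   Context: $G=[g_{ij}]\in\mathbb R^{n\times n}$. For a single sensor node $l$, $T_l(z)=\mathbf e_l^T(zI-G)^{-1}\mathbf e_q$ (scalar), $\|T_l\|_\infty=\sup_{|z|=1}|T_l(z)|$. The scalar input under $H_i$ has law $\mathcal N(\mu_i,\sigma_i^2)$; $N\in\mathbb N$. Mean shift ($\sigma_1^2=\sigma_2^2=\sigma_c^2>0$, $\mu_\Delta=\mu_2-\mu_1$): $\eta_s(l)^2=N\mu_\Delta^2|T_l(1)|^2/(\sigma_c^2|T_l(1)|^2+\sigma_v^2)$ and $\mathbb P_{e_m}(l)=Q_{\mathcal N}(\eta_s(l)/2)$. Covariance shift ($\mu_1=\mu_2$, $\sigma_1^2>\sigma_2^2\ge0$): $R_s(l)=(\sigma_1^2\|T_l\|_\infty^2+\sigma_v^2)/(\sigma_2^2\|T_l\|_\infty^2+\sigma_v^2)$,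 $\tau(R)=\ln R/(R-1)$ for $R>1$, $\tau(1)=1$, $\mathbb P_{e_v}(l)=\tfrac12[1-Q_{\chi^2}(1,\tau(R_s(l)))]+\tfrac12Q_{\chi^2}(1,\tau(R_s(l))R_s(l))$. $Q_{\mathcal N}(t)=\Pr[Z\ge t]$, $Z\sim\mathcal N(0,1)$; $Q_{\chi^2}(1,t)=\Pr[Y\ge t]$, $Y\sim\chi^2(1)$. Node cutset: a partition $\{1,\dots,n\}=\mathcal S\sqcup\mathcal C\sqcup\mathcal P$ into nonempty sets with the input node $q\in\mathcal S$, $\mathrm{dist}(\{q\},\mathcal C)\ge d$ for some $d\ge1$ (graph distance in the digraph with edges $\{(i,j):g_{ij}\ne0\}$), and $g_{ij}=g_{ji}=0$ for all $i\in\mathcal P$, $j\in\mathcal S$. $G_{pp}$, $G_{pc}$ are the submatrices of $G$ with rows in $\mathcal P$ and columns in $\mathcal P$, resp. $\mathcal C$. $\overline\lambda$ is spectral radius. *)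

theory Defs
  imports "HOL-Analysis.Analysis" "HOL-Probability.Probability"
begin

(* Nodes are the elements of a finite type 'n; G :: real^'n^'n with G $ i $ k = g_ik. *)

definition cmat :: "real^'n^'n \<Rightarrow> complex^'n^'n" where
  "cmat G = (\<chi> i k. complex_of_real (G $ i $ k))"

definition spectral_radius :: "real^'n^'n \<Rightarrow> real" where
  "spectral_radius G =
     Sup {cmod lam | lam. \<exists>v::complex^'n. v \<noteq> 0 \<and> cmat G *v v = lam *s v}"

definition transfer :: "real^'n^'n \<Rightarrow> 'n \<Rightarrow> 'n \<Rightarrow> complex \<Rightarrow> complex" where
  "transfer G q l z = matrix_inv (mat z - cmat G) $ l $ q"

definition hinf_norm :: "(complex \<Rightarrow> complex) \<Rightarrow> real" where
  "hinf_norm T = Sup {cmod (T z) | z. cmod z = 1}"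

definition std_normal :: "real measure" where
  "std_normal = density lborel std_normal_density"

definition Q_N :: "real \<Rightarrow> real" where
  "Q_N t = measure std_normal {t..}"

(* Q_chi2(1,t) = Pr[Y >= t], Y = Z^2 ~ chi^2(1) *)
definition Q_chi2_1 :: "real \<Rightarrow> real" where
  "Q_chi2_1 t = measure std_normal {x. x\<^sup>2 \<ge> t}"

(* mean shift: sc2 = sigma_c^2, sv2 = sigma_v^2, mu_delta = mu_2 - mu_1 *)
definition eta_s :: "real^'n^'n \<Rightarrow> 'n \<Rightarrow> nat \<Rightarrow> real \<Rightarrow> real \<Rightarrow> real \<Rightarrow> 'n \<Rightarrow> real" where
  "eta_s G q N mu_delta sc2 sv2 l =
     sqrt (real N * mu_delta\<^sup>2 * (cmod (transfer G q l 1))\<^sup>2 /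
           (sc2 * (cmod (transfer G q l 1))\<^sup>2 + sv2))"

definition P_em :: "real^'n^'n \<Rightarrow> 'n \<Rightarrow> nat \<Rightarrow> real \<Rightarrow> real \<Rightarrow> real \<Rightarrow> 'n \<Rightarrow> real" where
  "P_em G q N mu_delta sc2 sv2 l = Q_N (eta_s G q N mu_delta sc2 sv2 l / 2)"

(* covariance shift: s1 = sigma_1^2, s2 = sigma_2^2 *)
definition R_s :: "real^'n^'n \<Rightarrow> 'n \<Rightarrow> real \<Rightarrow> real \<Rightarrow> real \<Rightarrow> 'n \<Rightarrow> real" where
  "R_s G q s1 s2 sv2 l =
     (s1 * (hinf_norm (transfer G q l))\<^sup>2 + sv2) / (s2 * (hinf_norm (transfer G q l))\<^sup>2 + sv2)"

definition tau :: "real \<Rightarrow> real" where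
  "tau R = (if R = 1 then 1 else ln R / (R - 1))"

definition P_ev :: "real^'n^'n \<Rightarrow> 'n \<Rightarrow> real \<Rightarrow> real \<Rightarrow> real \<Rightarrow> 'n \<Rightarrow> real" where
  "P_ev G q s1 s2 sv2 l =
     (let R = R_s G q s1 s2 sv2 l in
      1/2 * (1 - Q_chi2_1 (tau R)) + 1/2 * Q_chi2_1 (tau R * R))"

definition edges :: "real^'n^'n \<Rightarrow> ('n \<times> 'n) set" where
  "edges G = {(i,k). G $ i $ k \<noteq> 0}"

definition dist_ge :: "real^'n^'n \<Rightarrow> 'n \<Rightarrow> 'n set \<Rightarrow> nat \<Rightarrow> bool" where
  "dist_ge G q C d = (\<forall>k<d. \<forall>c\<in>C. (q, c) \<notin> edges G ^^ k)"

definition node_cutset :: "real^'n^'n \<Rightarrow> 'n \<Rightarrow> 'n set \<Rightarrow> 'n set \<Rightarrow> 'n set \<Rightarrow> bool" where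
  "node_cutset G q S C P =
     (S \<noteq> {} \<and> C \<noteq> {} \<and> P \<noteq> {} \<and>
      S \<inter> C = {} \<and> S \<inter> P = {} \<and> C \<inter> P = {} \<and> S \<union> C \<union> P = UNIV \<and>
      q \<in> S \<and> (\<exists>d\<ge>1. dist_ge G q C d) \<and>
      (\<forall>i\<in>P. \<forall>k\<in>S. G $ i $ k = 0 \<and> G $ k $ i = 0))"

end

theory Submission
  imports Defs
begin


lemma eig_bound:
  fixes G :: "real^'n^'n"
  assumes v: "v \<noteq> 0" and ev: "cmat G *v v = lam *s v"
  shows "cmod lam \<le> (\<Sum>i\<in>UNIV. \<Sum>k\<in>UNIV. \<bar>G$i$k\<bar>)"
proof -
  define m where "m = Max (range (\<lambda>i. cmod (v$i)))"
  have "m \<in> range (\<lambda>i. cmod (v$i))" unfolding m_def by (rule Max_in) auto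
  then obtain l where l: "cmod (v$l) = m" by auto
  have mge: "cmod (v$k) \<le> m" for k unfolding m_def by (rule Max_ge) auto
  have "m > 0"
  proof (rule ccontr)
    assume "\<not> m > 0"
    then have "v$k = 0" for k using mge[of k] by (smt (verit) norm_ge_zero norm_le_zero_iff)
    then show False using v by (simp add: vec_eq_iff)
  qed
  have "lam * v$l = (\<Sum>k\<in>UNIV. complex_of_real (G$l$k) * v$k)"
    using ev[THEN arg_cong[where f="\<lambda>x. x$l"]] by (simp add: matrix_vector_mult_def cmat_def)
  then have "cmod lam * m = cmod (\<Sum>k\<in>UNIV. complex_of_real (G$l$k) * v$k)"
  proof -
    have "cmod lam * m = cmod (lam * v$l)" using l by (simp add: norm_mult)
    then show ?thesis using \<open>lam * v$l = _\<close> by simp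
  qed
  also have "\<dots> \<le> (\<Sum>k\<in>UNIV. cmod (complex_of_real (G$l$k) * v$k))" by (rule norm_sum)
  also have "\<dots> \<le> (\<Sum>k\<in>UNIV. \<bar>G$l$k\<bar> * m)"
  proof (rule sum_mono)
    fix k
    have "cmod (complex_of_real (G$l$k) * v$k) = \<bar>G$l$k\<bar> * cmod (v$k)" by (simp add: norm_mult)
    also have "\<dots> \<le> \<bar>G$l$k\<bar> * m" by (rule mult_left_mono[OF mge]) simp
    finally show "cmod (complex_of_real (G$l$k) * v$k) \<le> \<bar>G$l$k\<bar> * m" .
  qed
  also have "\<dots> = (\<Sum>k\<in>UNIV. \<bar>G$l$k\<bar>) * m" by (simp add: sum_distrib_right)
  finally have "cmod lam * m \<le> (\<Sum>k\<in>UNIV. \<bar>G$l$k\<bar>) * m" .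
  then have "cmod lam \<le> (\<Sum>k\<in>UNIV. \<bar>G$l$k\<bar>)" using \<open>m>0\<close> by (rule mult_right_le_imp_le)
  also have "\<dots> \<le> (\<Sum>i\<in>UNIV. \<Sum>k\<in>UNIV. \<bar>G$i$k\<bar>)"
    by (rule member_le_sum) (auto intro: sum_nonneg)
  finally show ?thesis .
qed

lemma sr_ge:
  fixes G :: "real^'n^'n"
  assumes v: "v \<noteq> 0" and ev: "cmat G *v v = lam *s v"
  shows "cmod lam \<le> spectral_radius G"
  unfolding spectral_radius_def
  apply (rule cSup_upper)
  using v ev apply blast
  unfolding bdd_above_def using eig_bound by blast



lemma subinv_sr:
  fixes G :: "real^'n^'n" and u :: "real^'n"
  assumes nonneg: "\<forall>i k. G$i$k \<ge> 0" and u0: "\<forall>i. u$i \<ge> 0" and unz: "u \<noteq> 0"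
    and sub: "\<forall>i. u$i \<le> (G *v u)$i"
  shows "spectral_radius G \<ge> 1"
proof -
  define K where "K = {v::real^'n. (\<forall>i. 0 \<le> v$i) \<and> (\<Sum>i\<in>UNIV. v$i) = 1 \<and> (\<forall>i. v$i \<le> (G *v v)$i)}"
  define s where "s = (\<lambda>v::real^'n. \<Sum>i\<in>UNIV. (G *v v)$i)"
  define f where "f = (\<lambda>v. (1 / s v) *\<^sub>R (G *v v))"
  have mono: "\<forall>i. 0 \<le> (G *v v)$i" if "\<forall>i. 0 \<le> v$i" for v
    using that nonneg by (simp add: matrix_vector_mult_def sum_nonneg)
  have Gmono: "(G *v v)$i \<le> (G *v w)$i" if "\<forall>i. v$i \<le> w$i" for v w i
    using that nonneg by (auto simp: matrix_vector_mult_def intro!: sum_mono mult_left_mono)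
  have sge: "s v \<ge> 1" if "v \<in> K" for v
  proof -
    have "1 = (\<Sum>i\<in>UNIV. v$i)" using that by (simp add: K_def)
    also have "\<dots> \<le> s v" unfolding s_def
      by (rule sum_mono) (use that in \<open>simp add: K_def\<close>)
    finally show ?thesis .
  qed
  have closedK: "closed K"
    unfolding K_def
    by (intro closed_Collect_conj closed_Collect_all closed_Collect_le closed_Collect_eq continuous_intros)
  have boundedK: "bounded K"
  proof -
    have "norm v \<le> 1" if "v \<in> K" for v
    proof -
      have "norm v \<le> (\<Sum>i\<in>UNIV. \<bar>v$i\<bar>)" by (rule norm_le_l1_cart)
      also have "\<dots> = 1" using that by (simp add: K_def)
      finally show ?thesis .
    qed
    then show ?thesis by (auto simp: bounded_iff)
  qed
  have convexK: "convex K"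
    unfolding convex_def
  proof (intro ballI allI impI)
    fix x y :: "real^'n" and a b :: real
    assume x: "x \<in> K" and y: "y \<in> K" and ab1: "0 \<le> a" and ab2: "0 \<le> b" and ab3: "a + b = 1"
    have lin: "G *v (a *\<^sub>R x + b *\<^sub>R y) = a *\<^sub>R (G *v x) + b *\<^sub>R (G *v y)"
      by (simp add: matrix_vector_right_distrib matrix_vector_mult_scaleR)
    have c1: "\<forall>i. 0 \<le> (a *\<^sub>R x + b *\<^sub>R y) $ i" using x y ab1 ab2 ab3 by (simp add: K_def)
    have c2: "\<forall>i. (a *\<^sub>R x + b *\<^sub>R y) $ i \<le> (G *v (a *\<^sub>R x + b *\<^sub>R y)) $ i"
      unfolding lin using x y ab1 ab2 ab3
      by (simp add: K_def add_mono mult_left_mono)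
    have c3: "(\<Sum>i\<in>UNIV. (a *\<^sub>R x + b *\<^sub>R y) $ i) = 1"
      using x y ab1 ab2 ab3 by (simp add: K_def sum.distrib sum_distrib_left[symmetric])
    show "a *\<^sub>R x + b *\<^sub>R y \<in> K" unfolding K_def using c1 c2 c3 by blast
  qed
  define u' where "u' = (1 / (\<Sum>i\<in>UNIV. u$i)) *\<^sub>R u"
  have su: "(\<Sum>i\<in>UNIV. u$i) > 0"
  proof -
    obtain i where "u$i \<noteq> 0" using unz by (auto simp: vec_eq_iff)
    then have "u$i > 0" using u0[rule_format, of i] by linarith
    moreover have "u$i \<le> (\<Sum>i\<in>UNIV. u$i)" using u0 by (intro member_le_sum) auto
    ultimately show ?thesis by simp
  qed
  have "u' \<in> K"
    unfolding K_def u'_def using u0 sub su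
    by (auto simp: matrix_vector_mult_scaleR sum_divide_distrib[symmetric] divide_right_mono)
  then have Kne: "K \<noteq> {}" by auto
  have contf: "continuous_on K f"
    unfolding f_def s_def
    apply (intro continuous_intros)
    using sge unfolding s_def by fastforce
  have fK: "f \<in> K \<rightarrow> K"
  proof
    fix v assume v: "v \<in> K"
    have sv: "s v \<ge> 1" using sge[OF v] .
    have v0: "\<forall>i. 0 \<le> v$i" using v by (simp add: K_def)
    have c1: "\<forall>i. 0 \<le> ((1 / s v) *\<^sub>R (G *v v)) $ i" using mono[OF v0] sv by simp
    have c2: "\<forall>i. ((1 / s v) *\<^sub>R (G *v v)) $ i \<le> (G *v ((1 / s v) *\<^sub>R (G *v v))) $ i"
    proof
      fix i
      have "(G *v v) $ i \<le> (G *v (G *v v)) $ i"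
        by (rule Gmono) (use v in \<open>simp add: K_def\<close>)
      then show "((1 / s v) *\<^sub>R (G *v v)) $ i \<le> (G *v ((1 / s v) *\<^sub>R (G *v v))) $ i"
        using sv by (simp add: matrix_vector_mult_scaleR divide_simps)
    qed
    have c3: "(\<Sum>i\<in>UNIV. ((1 / s v) *\<^sub>R (G *v v)) $ i) = 1"
      using sv by (simp add: s_def sum_divide_distrib[symmetric])
    show "f v \<in> K" unfolding K_def f_def using c1 c2 c3 by blast
  qed
  obtain v where vK: "v \<in> K" and fv: "f v = v"
    using brouwer[OF compact_eq_bounded_closed[THEN iffD2, OF conjI[OF boundedK closedK]] convexK Kne contf fK]
    by blast
  have sv: "s v \<ge> 1" using sge[OF vK] .
  have Gv: "G *v v = s v *\<^sub>R v"
    using fv sv unfolding f_def by (metis (no_types, lifting) divide_eq_0_iff scaleR_one scaleR_scaleR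
        nonzero_mult_div_cancel_left mult.commute not_one_le_zero order_trans zero_le_one times_divide_eq_left
        divide_self_if)
  define w where "w = (\<chi> i. complex_of_real (v$i))"
  have "v \<noteq> 0" using vK by (auto simp: K_def)
  then have wnz: "w \<noteq> 0" by (auto simp: w_def vec_eq_iff)
  have "cmat G *v w = complex_of_real (s v) *s w"
  proof -
    have "(cmat G *v w)$i = (complex_of_real (s v) *s w)$i" for i
    proof -
      have "(cmat G *v w)$i = complex_of_real ((G *v v)$i)"
        by (simp add: matrix_vector_mult_def cmat_def w_def)
      also have "\<dots> = complex_of_real (s v * v$i)" using Gv by (simp add: vec_eq_iff)
      finally show ?thesis by (simp add: w_def)
    qed
    then show ?thesis by (simp add: vec_eq_iff)
  qed
  from sr_ge[OF wnz this] have "cmod (complex_of_real (s v)) \<le> spectral_radius G" .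
  then show ?thesis using sv by simp
qed



lemma Gmono:
  fixes G :: "real^'n^'n"
  assumes nonneg: "\<forall>i k. G$i$k \<ge> 0" and "\<forall>i. v$i \<le> w$i"
  shows "(G *v v)$i \<le> (G *v w)$i"
  using assms by (auto simp: matrix_vector_mult_def intro!: sum_mono mult_left_mono)

lemma subsol_nonpos:
  fixes G :: "real^'n^'n" and d :: "real^'n"
  assumes nonneg: "\<forall>i k. G$i$k \<ge> 0" and stable: "spectral_radius G < 1"
    and h: "\<forall>i. d$i > 0 \<longrightarrow> d$i \<le> (G *v (\<chi> k. max (d$k) 0))$i"
  shows "d$i \<le> 0"
proof -
  define u where "u = (\<chi> k. max (d$k) 0)"
  have u0: "\<forall>i. u$i \<ge> 0" by (simp add: u_def)
  have "\<forall>i. 0 \<le> (G *v u)$i"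
    using u0 nonneg by (simp add: matrix_vector_mult_def sum_nonneg)
  have sub: "\<forall>i. u$i \<le> (G *v u)$i"
  proof
    fix i
    show "u$i \<le> (G *v u)$i"
    proof (cases "d$i > 0")
      case True
      then show ?thesis using h unfolding u_def by simp
    next
      case False
      then have "u$i = 0" unfolding u_def by simp
      then show ?thesis using \<open>\<forall>i. 0 \<le> (G *v u)$i\<close> by simp
    qed
  qed
  have "u = 0"
  proof (rule ccontr)
    assume "u \<noteq> 0"
    from subinv_sr[OF nonneg u0 this sub] stable show False by simp
  qed
  then have "u$i = 0" by simp
  then show ?thesis by (simp add: u_def)
qed

lemma subsol_nonpos2:
  fixes G :: "real^'n^'n" and d :: "real^'n"
  assumes nonneg: "\<forall>i k. G$i$k \<ge> 0" and stable: "spectral_radius G < 1"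
    and h: "\<forall>i. d$i \<le> (G *v d)$i"
  shows "d$i \<le> 0"
proof (rule subsol_nonpos[OF nonneg stable])
  show "\<forall>i. d$i > 0 \<longrightarrow> d$i \<le> (G *v (\<chi> k. max (d$k) 0))$i"
  proof (intro allI impI)
    fix i assume "d$i > 0"
    have "(G *v d)$i \<le> (G *v (\<chi> k. max (d$k) 0))$i" by (rule Gmono[OF nonneg]) simp
    then show "d$i \<le> (G *v (\<chi> k. max (d$k) 0))$i" using h by (meson order_trans)
  qed
qed

lemma eig_lt1:
  fixes G :: "real^'n^'n"
  assumes stable: "spectral_radius G < 1" and "v \<noteq> 0" "cmat G *v v = lam *s v"
  shows "cmod lam < 1"
  using sr_ge[OF assms(2,3)] stable by simp

lemma mat_diff_sum:
  fixes A :: "'a::comm_ring_1^'n^'n"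
  shows "(\<Sum>k\<in>UNIV. (mat z - A)$i$k * X k) = z * X i - (\<Sum>k\<in>UNIV. A$i$k * X k)"
proof -
  have "(\<Sum>k\<in>UNIV. (mat z - A)$i$k * X k) = (\<Sum>k\<in>UNIV. (if i = k then z * X k else 0) - A$i$k * X k)"
    by (rule sum.cong) (auto simp: mat_def left_diff_distrib)
  also have "\<dots> = z * X i - (\<Sum>k\<in>UNIV. A$i$k * X k)"
    by (simp add: sum_subtractf sum.delta)
  finally show ?thesis .
qed

lemma invM:
  fixes G :: "real^'n^'n"
  assumes stable: "spectral_radius G < 1" and z: "cmod z \<ge> 1"
  shows "invertible (mat z - cmat G)"
  unfolding invertible_left_inverse matrix_left_invertible_ker
proof (intro allI impI)
  fix x assume "(mat z - cmat G) *v x = 0"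
  then have "\<forall>i. z * x$i - (\<Sum>k\<in>UNIV. cmat G$i$k * x$k) = 0"
    using mat_diff_sum[of z "cmat G" _ "\<lambda>k. x$k"] by (simp add: vec_eq_iff matrix_vector_mult_def)
  then have "cmat G *v x = z *s x"
    by (simp add: vec_eq_iff matrix_vector_mult_def)
  show "x = 0"
  proof (rule ccontr)
    assume "x \<noteq> 0"
    from eig_lt1[OF stable this \<open>cmat G *v x = z *s x\<close>] z show False by simp
  qed
qed

lemma transfer_eq:
  fixes G :: "real^'n^'n"
  assumes stable: "spectral_radius G < 1" and z: "cmod z \<ge> 1"
  shows "z * transfer G q i z = (\<Sum>k\<in>UNIV. complex_of_real (G$i$k) * transfer G q k z) + (if i = q then 1 else 0)"
proof -
  define M where "M = mat z - cmat G"
  have "\<exists>A'. M ** A' = mat 1 \<and> A' ** M = mat 1"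
    using invM[OF stable z] unfolding invertible_def M_def by blast
  then have "M ** matrix_inv M = mat 1 \<and> matrix_inv M ** M = mat 1"
    unfolding matrix_inv_def by (rule someI_ex)
  then have "(M ** matrix_inv M)$i$q = (mat 1 :: complex^'n^'n)$i$q" by simp
  then have "(\<Sum>k\<in>UNIV. M$i$k * matrix_inv M$k$q) = (if i = q then 1 else 0)"
    by (simp add: matrix_matrix_mult_def mat_def)
  moreover have "(\<Sum>k\<in>UNIV. M$i$k * matrix_inv M$k$q) =
      z * matrix_inv M$i$q - (\<Sum>k\<in>UNIV. complex_of_real (G$i$k) * matrix_inv M$k$q)"
    unfolding M_def mat_diff_sum by (simp add: cmat_def)
  ultimately have "z * matrix_inv M$i$q - (\<Sum>k\<in>UNIV. complex_of_real (G$i$k) * matrix_inv M$k$q) = (if i = q then 1 else 0)"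
    by simp
  then have "z * matrix_inv M$i$q = (if i = q then 1 else 0) + (\<Sum>k\<in>UNIV. complex_of_real (G$i$k) * matrix_inv M$k$q)"
    by (simp only: diff_eq_eq)
  then show ?thesis unfolding transfer_def M_def by (simp only: add.commute)
qed



lemma T1_real:
  fixes G :: "real^'n^'n"
  assumes nonneg: "\<forall>i k. G$i$k \<ge> 0" and stable: "spectral_radius G < 1"
  shows "Im (transfer G q l 1) = 0" "Re (transfer G q l 1) \<ge> 0"
    "Re (transfer G q i 1) = (\<Sum>k\<in>UNIV. G$i$k * Re (transfer G q k 1)) + (if i = q then 1 else 0)"
proof -
  define m where "m = (\<chi> l. Im (transfer G q l 1))"
  define r where "r = (\<chi> l. Re (transfer G q l 1))"
  have eq: "transfer G q i 1 = (\<Sum>k\<in>UNIV. complex_of_real (G$i$k) * transfer G q k 1) + (if i = q then 1 else 0)" for i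
    using transfer_eq[OF stable, of 1 q i] by simp
  have mi: "m$i = (G *v m)$i" for i
    using arg_cong[OF eq[of i], of Im] by (simp add: m_def matrix_vector_mult_def)
  have ri: "r$i = (G *v r)$i + (if i = q then 1 else 0)" for i
    using arg_cong[OF eq[of i], of Re] by (simp add: r_def matrix_vector_mult_def)
  have neg: "(G *v (-v))$i = - (G *v v)$i" for v :: "real^'n" and i
    by (simp add: matrix_vector_mult_def sum_negf)
  have "m$l \<le> 0" by (rule subsol_nonpos2[OF nonneg stable]) (intro allI eq_refl mi)
  moreover have "(-m)$l \<le> 0"
    by (rule subsol_nonpos2[OF nonneg stable]) (intro allI, simp only: neg vector_uminus_component mi[symmetric] order_refl)
  ultimately show "Im (transfer G q l 1) = 0" by (simp add: m_def)
  have "(-r)$l \<le> 0"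
  proof (rule subsol_nonpos2[OF nonneg stable], rule allI)
    fix i
    show "(-r)$i \<le> (G *v (-r))$i" using ri[of i] neg[of r i] by simp
  qed
  then show "Re (transfer G q l 1) \<ge> 0" by (simp add: r_def)
  show "Re (transfer G q i 1) = (\<Sum>k\<in>UNIV. G$i$k * Re (transfer G q k 1)) + (if i = q then 1 else 0)"
    using ri[of i] by (simp add: r_def matrix_vector_mult_def)
qed

lemma T_bound:
  fixes G :: "real^'n^'n"
  assumes nonneg: "\<forall>i k. G$i$k \<ge> 0" and stable: "spectral_radius G < 1" and z: "cmod z = 1"
  shows "cmod (transfer G q l z) \<le> Re (transfer G q l 1)"
proof -
  define a where "a = (\<chi> l. cmod (transfer G q l z))"
  define r where "r = (\<chi> l. Re (transfer G q l 1))"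
  have ai: "a$i \<le> (G *v a)$i + (if i = q then 1 else 0)" for i
  proof -
    have "a$i = cmod (z * transfer G q i z)" using z by (simp add: a_def norm_mult)
    also have "\<dots> = cmod ((\<Sum>k\<in>UNIV. complex_of_real (G$i$k) * transfer G q k z) + (if i = q then 1 else 0))"
      using transfer_eq[OF stable, of z q i] z by simp
    also have "\<dots> \<le> cmod (\<Sum>k\<in>UNIV. complex_of_real (G$i$k) * transfer G q k z) + cmod (if i = q then 1 else 0 :: complex)"
      by (rule norm_triangle_ineq)
    also have "\<dots> \<le> (\<Sum>k\<in>UNIV. cmod (complex_of_real (G$i$k) * transfer G q k z)) + (if i = q then 1 else 0)"
      by (rule add_mono[OF norm_sum]) simp
    also have "(\<Sum>k\<in>UNIV. cmod (complex_of_real (G$i$k) * transfer G q k z)) = (G *v a)$i"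
      unfolding a_def matrix_vector_mult_def vec_lambda_beta
      by (rule sum.cong) (use nonneg in \<open>simp_all add: norm_mult\<close>)
    finally show ?thesis .
  qed
  have ri: "r$i = (G *v r)$i + (if i = q then 1 else 0)" for i
    using T1_real(3)[OF nonneg stable, of q i] by (simp add: r_def matrix_vector_mult_def)
  have "(a - r)$l \<le> 0"
  proof (rule subsol_nonpos2[OF nonneg stable], rule allI)
    fix i
    show "(a - r)$i \<le> (G *v (a - r))$i"
      using ai[of i] ri[of i] by (simp add: matrix_vector_mult_diff_distrib)
  qed
  then show ?thesis by (simp add: a_def r_def)
qed

lemma hinf_eq:
  fixes G :: "real^'n^'n"
  assumes nonneg: "\<forall>i k. G$i$k \<ge> 0" and stable: "spectral_radius G < 1"
  shows "hinf_norm (transfer G q l) = Re (transfer G q l 1)"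
    and "cmod (transfer G q l 1) = Re (transfer G q l 1)"
proof -
  show c1: "cmod (transfer G q l 1) = Re (transfer G q l 1)"
    using T1_real[OF nonneg stable, of q l] by (simp add: cmod_eq_Re)
  show "hinf_norm (transfer G q l) = Re (transfer G q l 1)"
    unfolding hinf_norm_def
  proof (rule cSup_eq_maximum)
    show "Re (transfer G q l 1) \<in> {cmod (transfer G q l z) |z. cmod z = 1}"
      by (rule CollectI, rule exI[of _ 1]) (simp add: c1)
    show "x \<le> Re (transfer G q l 1)" if "x \<in> {cmod (transfer G q l z) |z. cmod z = 1}" for x
    proof -
      from that obtain z where "x = cmod (transfer G q l z)" "cmod z = 1" by blast
      then show ?thesis using T_bound[OF nonneg stable, of z q l] by simp
    qed
  qed
qed



lemma ln_lower: "x > 0 \<Longrightarrow> 1 - 1/x \<le> ln (x::real)"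
proof -
  assume x: "x > 0"
  have "ln (1/x) \<le> 1/x - 1" using x by (intro ln_le_minus_one) simp
  moreover have "ln (1/x) = - ln x" using x by (simp add: ln_div)
  ultimately show ?thesis by simp
qed

lemma tau_anti:
  assumes "1 \<le> R1" "R1 \<le> R2"
  shows "tau R2 \<le> tau R1"
proof (cases "R1 = 1")
  case True
  show ?thesis
  proof (cases "R2 = 1")
    case True then show ?thesis using \<open>R1 = 1\<close> by simp
  next
    case False
    then have "R2 > 1" using assms by simp
    have "ln R2 \<le> R2 - 1" using \<open>R2 > 1\<close> by (intro ln_le_minus_one) simp
    then have "ln R2 / (R2 - 1) \<le> 1" using \<open>R2 > 1\<close> by (simp add: divide_le_eq)
    then show ?thesis using False True by (simp add: tau_def)
  qed
next
  case False
  then have R1: "R1 > 1" using assms by simp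
  then have R2: "R2 > 1" using assms by simp
  define A where "A = R1 - 1"
  define D where "D = R2 - R1"
  have A: "A > 0" using R1 by (simp add: A_def)
  have D: "D \<ge> 0" using assms by (simp add: D_def)
  have i: "ln R2 - ln R1 \<le> D / R1"
  proof -
    have "ln (R2/R1) \<le> R2/R1 - 1" using R1 R2 by (intro ln_le_minus_one) simp
    moreover have "ln (R2/R1) = ln R2 - ln R1" using R1 R2 by (simp add: ln_div)
    moreover have "R2/R1 - 1 = D / R1" using R1 by (simp add: D_def field_simps)
    ultimately show ?thesis by simp
  qed
  have ii: "A / R1 \<le> ln R1"
    using ln_lower[of R1] R1 by (simp add: A_def field_simps)
  have "ln R2 * A \<le> (ln R1 + D / R1) * A"
    using i A by (intro mult_right_mono) auto
  also have "\<dots> = ln R1 * A + D * (A / R1)" by (simp add: algebra_simps)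
  also have "\<dots> \<le> ln R1 * A + D * ln R1"
    using mult_left_mono[OF ii D] by simp
  finally have key: "ln R2 * (R1 - 1) \<le> ln R1 * (R2 - 1)"
    by (simp add: A_def D_def algebra_simps)
  have "ln R2 / (R2 - 1) \<le> ln R1 / (R1 - 1)"
    using key R1 R2 by (simp add: divide_le_eq le_divide_eq mult.commute)
  then show ?thesis using R1 R2 by (simp add: tau_def)
qed

lemma tauR_mono:
  assumes "1 \<le> R1" "R1 \<le> R2"
  shows "tau R1 * R1 \<le> tau R2 * R2"
proof (cases "R1 = 1")
  case True
  show ?thesis
  proof (cases "R2 = 1")
    case True then show ?thesis using \<open>R1 = 1\<close> by simp
  next
    case False
    then have "R2 > 1" using assms by simp
    have "1 - 1/R2 \<le> ln R2" using \<open>R2 > 1\<close> by (intro ln_lower) simp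
    then have "R2 - 1 \<le> R2 * ln R2" using \<open>R2 > 1\<close> by (simp add: field_simps)
    then have "1 \<le> ln R2 / (R2 - 1) * R2" using \<open>R2 > 1\<close> by (simp add: le_divide_eq mult.commute)
    then show ?thesis using False True by (simp add: tau_def)
  qed
next
  case False
  then have R1: "R1 > 1" using assms by simp
  then have R2: "R2 > 1" using assms by simp
  define A where "A = R1 - 1"
  define D where "D = R2 - R1"
  have A: "A > 0" using R1 by (simp add: A_def)
  have D: "D \<ge> 0" using assms by (simp add: D_def)
  have iii: "D / R2 \<le> ln R2 - ln R1"
  proof -
    have "1 - 1/(R2/R1) \<le> ln (R2/R1)" using R1 R2 by (intro ln_lower) simp
    moreover have "ln (R2/R1) = ln R2 - ln R1" using R1 R2 by (simp add: ln_div)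
    moreover have "1 - 1/(R2/R1) = D / R2" using R2 by (simp add: D_def field_simps)
    ultimately show ?thesis by simp
  qed
  have iv: "ln R1 \<le> A" using R1 ln_le_minus_one[of R1] by (simp add: A_def)
  have "R1 * ln R1 * (R2 - 1) = R2 * ln R1 * A + D * ln R1"
    by (simp add: A_def D_def algebra_simps)
  also have "\<dots> \<le> R2 * ln R1 * A + D * A"
    using mult_left_mono[OF iv D] by simp
  also have "\<dots> = R2 * (ln R1 + D / R2) * A" using R2 by (simp add: field_simps)
  also have "\<dots> \<le> R2 * ln R2 * A"
    using iii R2 A by (intro mult_right_mono mult_left_mono) auto
  finally have key: "R1 * ln R1 * (R2 - 1) \<le> R2 * ln R2 * (R1 - 1)" by (simp add: A_def)
  have "ln R1 / (R1 - 1) * R1 \<le> ln R2 / (R2 - 1) * R2"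
    using key R1 R2 by (simp add: divide_le_eq le_divide_eq field_simps)
  then show ?thesis using R1 R2 by (simp add: tau_def)
qed

lemma ps_std: "prob_space std_normal"
  unfolding std_normal_def by (rule prob_space_normal_density) simp

lemma sets_std: "sets std_normal = sets borel"
  unfolding std_normal_def by simp

lemma QN_anti: "a \<le> b \<Longrightarrow> Q_N b \<le> Q_N a"
  unfolding Q_N_def
proof (rule finite_measure.finite_measure_mono[OF prob_space.finite_measure[OF ps_std]])
  show "a \<le> b \<Longrightarrow> {b..} \<subseteq> {a..}" by auto
  show "{a::real..} \<in> sets std_normal" unfolding sets_std by simp
qed

lemma Qchi_anti: "a \<le> b \<Longrightarrow> Q_chi2_1 b \<le> Q_chi2_1 a"
  unfolding Q_chi2_1_def
proof (rule finite_measure.finite_measure_mono[OF prob_space.finite_measure[OF ps_std]])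
  show "a \<le> b \<Longrightarrow> {x. b \<le> x\<^sup>2} \<subseteq> {x. a \<le> x\<^sup>2}" by auto
  have "closed {x::real. a \<le> x\<^sup>2}"
    by (intro closed_Collect_le continuous_intros)
  then show "{x::real. a \<le> x\<^sup>2} \<in> sets std_normal" unfolding sets_std by (rule borel_closed)
qed


lemma cmp_lemma:
  fixes G :: "real^'n^'n" and x :: "'n \<Rightarrow> real"
  assumes nonneg: "\<forall>i k. G$i$k \<ge> 0" and stable: "spectral_radius G < 1"
    and h: "\<forall>i\<in>P. x i \<le> (\<Sum>k\<in>P. G$i$k * x k)"
    and iP: "i \<in> P"
  shows "x i \<le> 0"
proof -
  define d where "d = (\<chi> i. if i \<in> P then x i else 0)"
  have "d$i \<le> 0"
  proof (rule subsol_nonpos[OF nonneg stable], intro allI impI)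
    fix i assume di: "d$i > 0"
    then have i: "i \<in> P" by (auto simp: d_def split: if_splits)
    have "d$i = x i" using i by (simp add: d_def)
    also have "\<dots> \<le> (\<Sum>k\<in>P. G$i$k * x k)" using h i by blast
    also have "\<dots> \<le> (\<Sum>k\<in>P. G$i$k * max (d$k) 0)"
      by (rule sum_mono, rule mult_left_mono) (use nonneg in \<open>auto simp: d_def\<close>)
    also have "\<dots> \<le> (\<Sum>k\<in>UNIV. G$i$k * max (d$k) 0)"
      by (rule sum_mono2) (use nonneg in auto)
    also have "\<dots> = (G *v (\<chi> k. max (d$k) 0))$i" by (simp add: matrix_vector_mult_def)
    finally show "d$i \<le> (G *v (\<chi> k. max (d$k) 0))$i" .
  qed
  then show ?thesis using iP by (simp add: d_def)
qed

lemma row_eq: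
  fixes G :: "real^'n^'n"
  assumes nonneg: "\<forall>i k. G$i$k \<ge> 0" and stable: "spectral_radius G < 1"
    and cut: "node_cutset G q S {j} P" and iP: "i \<in> P"
  shows "Re (transfer G q i 1) = (\<Sum>k\<in>P. G$i$k * Re (transfer G q k 1)) + G$i$j * Re (transfer G q j 1)"
proof -
  have iq: "i \<noteq> q" using cut iP unfolding node_cutset_def by blast
  have jP: "j \<notin> P" using cut unfolding node_cutset_def by blast
  have "Re (transfer G q i 1) = (\<Sum>k\<in>UNIV. G$i$k * Re (transfer G q k 1))"
    using T1_real(3)[OF nonneg stable, of q i] iq by simp
  also have "\<dots> = (\<Sum>k\<in>insert j P. G$i$k * Re (transfer G q k 1))"
  proof (rule sum.mono_neutral_right)
    show "\<forall>k\<in>UNIV - insert j P. G$i$k * Re (transfer G q k 1) = 0"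
    proof
      fix k assume "k \<in> UNIV - insert j P"
      then have "k \<in> S" using cut unfolding node_cutset_def by blast
      then have "G$i$k = 0" using cut iP unfolding node_cutset_def by blast
      then show "G$i$k * Re (transfer G q k 1) = 0" by simp
    qed
  qed auto
  also have "\<dots> = G$i$j * Re (transfer G q j 1) + (\<Sum>k\<in>P. G$i$k * Re (transfer G q k 1))"
    using jP by (simp add: sum.insert)
  finally show ?thesis by simp
qed

lemma PE_mono:
  fixes a b sc2 sv2 c :: real
  assumes "0 \<le> a" "a \<le> b" "sc2 > 0" "sv2 > 0" "c \<ge> 0"
  shows "Q_N (sqrt (c * b\<^sup>2 / (sc2 * b\<^sup>2 + sv2)) / 2) \<le> Q_N (sqrt (c * a\<^sup>2 / (sc2 * a\<^sup>2 + sv2)) / 2)"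
proof (rule QN_anti)
  have ab: "a\<^sup>2 \<le> b\<^sup>2" using assms by (intro power_mono) auto
  have pa: "sc2 * a\<^sup>2 + sv2 > 0" using assms by (simp add: add_nonneg_pos)
  have pb: "sc2 * b\<^sup>2 + sv2 > 0" using assms by (simp add: add_nonneg_pos)
  have "a\<^sup>2 * (sc2 * b\<^sup>2 + sv2) \<le> b\<^sup>2 * (sc2 * a\<^sup>2 + sv2)"
    using mult_right_mono[OF ab, of sv2] assms by (simp add: algebra_simps)
  then have "a\<^sup>2 / (sc2 * a\<^sup>2 + sv2) \<le> b\<^sup>2 / (sc2 * b\<^sup>2 + sv2)"
    using pa pb by (simp add: divide_le_eq le_divide_eq mult.commute)
  then have "c * (a\<^sup>2 / (sc2 * a\<^sup>2 + sv2)) \<le> c * (b\<^sup>2 / (sc2 * b\<^sup>2 + sv2))"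
    using assms by (intro mult_left_mono) auto
  then have "c * a\<^sup>2 / (sc2 * a\<^sup>2 + sv2) \<le> c * b\<^sup>2 / (sc2 * b\<^sup>2 + sv2)" by simp
  then show "sqrt (c * a\<^sup>2 / (sc2 * a\<^sup>2 + sv2)) / 2 \<le> sqrt (c * b\<^sup>2 / (sc2 * b\<^sup>2 + sv2)) / 2"
    by simp
qed

lemma PV_mono:
  fixes a b s1 s2 sv2 :: real
  assumes "0 \<le> a" "a \<le> b" "s1 > s2" "s2 \<ge> 0" "sv2 > 0"
  defines "Ra \<equiv> (s1 * a\<^sup>2 + sv2) / (s2 * a\<^sup>2 + sv2)"
    and "Rb \<equiv> (s1 * b\<^sup>2 + sv2) / (s2 * b\<^sup>2 + sv2)"
  shows "1/2 * (1 - Q_chi2_1 (tau Rb)) + 1/2 * Q_chi2_1 (tau Rb * Rb)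
       \<le> 1/2 * (1 - Q_chi2_1 (tau Ra)) + 1/2 * Q_chi2_1 (tau Ra * Ra)"
proof -
  have ab: "a\<^sup>2 \<le> b\<^sup>2" using assms by (intro power_mono) auto
  have pa: "s2 * a\<^sup>2 + sv2 > 0" using assms by (simp add: add_nonneg_pos)
  have pb: "s2 * b\<^sup>2 + sv2 > 0" using assms by (simp add: add_nonneg_pos)
  have "s2 * a\<^sup>2 \<le> s1 * a\<^sup>2" using assms by (intro mult_right_mono) auto
  then have R1: "1 \<le> Ra" using pa by (simp add: Ra_def le_divide_eq)
  have "(s1 - s2) * a\<^sup>2 * sv2 \<le> (s1 - s2) * b\<^sup>2 * sv2"
    using assms ab by (intro mult_right_mono mult_left_mono) auto
  then have "(s1 * a\<^sup>2 + sv2) * (s2 * b\<^sup>2 + sv2) \<le> (s1 * b\<^sup>2 + sv2) * (s2 * a\<^sup>2 + sv2)"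
    by (simp add: algebra_simps)
  then have R12: "Ra \<le> Rb" using pa pb
    by (simp add: Ra_def Rb_def divide_le_eq le_divide_eq mult.commute mult.left_commute)
  have "Q_chi2_1 (tau Ra) \<le> Q_chi2_1 (tau Rb)"
    by (rule Qchi_anti[OF tau_anti[OF R1 R12]])
  moreover have "Q_chi2_1 (tau Rb * Rb) \<le> Q_chi2_1 (tau Ra * Ra)"
    by (rule Qchi_anti[OF tauR_mono[OF R1 R12]])
  ultimately show ?thesis by (intro add_mono mult_left_mono) auto
qed

theorem proposition4:
  fixes G :: "real^'n^'n" and q j :: 'n and S P :: "'n set"
    and N :: nat and mu1 mu2 sc2 s1 s2 sv2 :: real
  assumes nonneg: "\<forall>i k. G $ i $ k \<ge> 0"
    and stable: "spectral_radius G < 1"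
    and sv2: "sv2 > 0"
    and sc2: "sc2 > 0"
    and s12: "s1 > s2" "s2 \<ge> 0"
    and cut: "node_cutset G q S {j} P"
  shows "((\<forall>i\<in>P. (\<Sum>k\<in>P \<union> {j}. G $ i $ k) \<le> 1) \<longrightarrow>
            (\<forall>j1\<in>P. P_em G q N (mu2 - mu1) sc2 sv2 j \<le> P_em G q N (mu2 - mu1) sc2 sv2 j1 \<and>
                      P_ev G q s1 s2 sv2 j \<le> P_ev G q s1 s2 sv2 j1))
       \<and> ((\<forall>i\<in>P. (\<Sum>k\<in>P \<union> {j}. G $ i $ k) > 1) \<longrightarrow>
            (\<forall>j1\<in>P. P_em G q N (mu2 - mu1) sc2 sv2 j \<ge> P_em G q N (mu2 - mu1) sc2 sv2 j1 \<and>
                      P_ev G q s1 s2 sv2 j \<ge> P_ev G q s1 s2 sv2 j1))"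
proof -
  define r where "r = (\<lambda>l. Re (transfer G q l 1))"
  have r0: "r l \<ge> 0" for l using T1_real(2)[OF nonneg stable] by (simp add: r_def)
  have jP: "j \<notin> P" using cut unfolding node_cutset_def by blast
  have rowsum: "(\<Sum>k\<in>P \<union> {j}. G $ i $ k) = (\<Sum>k\<in>P. G$i$k) + G$i$j" for i
    using jP by simp
  have req: "r i = (\<Sum>k\<in>P. G$i$k * r k) + G$i$j * r j" if "i \<in> P" for i
    using row_eq[OF nonneg stable cut that] by (simp add: r_def)
  have PEeq: "P_em G q N (mu2 - mu1) sc2 sv2 l =
     Q_N (sqrt ((real N * (mu2 - mu1)\<^sup>2) * (r l)\<^sup>2 / (sc2 * (r l)\<^sup>2 + sv2)) / 2)" for l
    unfolding P_em_def eta_s_def r_def hinf_eq(2)[OF nonneg stable] by simp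
  have PVeq: "P_ev G q s1 s2 sv2 l =
     (let R = (s1 * (r l)\<^sup>2 + sv2) / (s2 * (r l)\<^sup>2 + sv2) in
      1/2 * (1 - Q_chi2_1 (tau R)) + 1/2 * Q_chi2_1 (tau R * R))" for l
    unfolding P_ev_def R_s_def r_def hinf_eq(1)[OF nonneg stable] by simp
  have c0: "real N * (mu2 - mu1)\<^sup>2 \<ge> 0" by simp
  have both: "P_em G q N (mu2 - mu1) sc2 sv2 l2 \<le> P_em G q N (mu2 - mu1) sc2 sv2 l1 \<and>
      P_ev G q s1 s2 sv2 l2 \<le> P_ev G q s1 s2 sv2 l1" if "r l1 \<le> r l2" for l1 l2
    unfolding PEeq PVeq Let_def
    using PE_mono[OF r0 that sc2 sv2 c0] PV_mono[OF r0 that s12 sv2] by simp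
  show ?thesis
  proof (intro conjI impI ballI)
    fix j1 assume rows: "\<forall>i\<in>P. (\<Sum>k\<in>P \<union> {j}. G $ i $ k) \<le> 1" and j1: "j1 \<in> P"
    have "r j1 - r j \<le> 0"
    proof (rule cmp_lemma[OF nonneg stable _ j1, of "\<lambda>i. r i - r j"])
      show "\<forall>i\<in>P. r i - r j \<le> (\<Sum>k\<in>P. G$i$k * (r k - r j))"
      proof
        fix i assume i: "i \<in> P"
        have "((\<Sum>k\<in>P. G$i$k) + G$i$j) * r j \<le> 1 * r j"
          using rows i rowsum[of i] r0[of j] by (intro mult_right_mono) auto
        moreover have "(\<Sum>k\<in>P. G$i$k * (r k - r j)) = (\<Sum>k\<in>P. G$i$k * r k) - (\<Sum>k\<in>P. G$i$k) * r j"
          by (simp add: right_diff_distrib sum_subtractf sum_distrib_right)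
        ultimately show "r i - r j \<le> (\<Sum>k\<in>P. G$i$k * (r k - r j))"
          using req[OF i] by (simp add: distrib_right)
      qed
    qed
    then have "r j1 \<le> r j" by simp
    from both[OF this]
    show "P_em G q N (mu2 - mu1) sc2 sv2 j \<le> P_em G q N (mu2 - mu1) sc2 sv2 j1"
         "P_ev G q s1 s2 sv2 j \<le> P_ev G q s1 s2 sv2 j1" by auto
  next
    fix j1 assume rows: "\<forall>i\<in>P. (\<Sum>k\<in>P \<union> {j}. G $ i $ k) > 1" and j1: "j1 \<in> P"
    have "r j - r j1 \<le> 0"
    proof (rule cmp_lemma[OF nonneg stable _ j1, of "\<lambda>i. r j - r i"])
      show "\<forall>i\<in>P. r j - r i \<le> (\<Sum>k\<in>P. G$i$k * (r j - r k))"
      proof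
        fix i assume i: "i \<in> P"
        have "1 * r j \<le> ((\<Sum>k\<in>P. G$i$k) + G$i$j) * r j"
          using rows i rowsum[of i] r0[of j] by (intro mult_right_mono) auto
        moreover have "(\<Sum>k\<in>P. G$i$k * (r j - r k)) = (\<Sum>k\<in>P. G$i$k) * r j - (\<Sum>k\<in>P. G$i$k * r k)"
          by (simp add: right_diff_distrib sum_subtractf sum_distrib_right)
        ultimately show "r j - r i \<le> (\<Sum>k\<in>P. G$i$k * (r j - r k))"
          using req[OF i] by (simp add: distrib_right)
      qed
    qed
    then have "r j \<le> r j1" by simp
    from both[OF this]
    show "P_em G q N (mu2 - mu1) sc2 sv2 j1 \<le> P_em G q N (mu2 - mu1) sc2 sv2 j"
         "P_ev G q s1 s2 sv2 j1 \<le> P_ev G q s1 s2 sv2 j" by auto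
  qed
qed

end
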